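(* Let $I=(G,T,k)$, $G=(V,E)$, be a Node Multiway Cut instance satisfying: (R1) no two terminals are adjacent and $p(I)\ge 0$; (R2) no vertex of $V\setminus T$ is adjacent to two distinct terminals; (R3) for every terminal $t\in T$ and every neighbour $w\in V\setminus T$ of $t$, the optimum value of the LP-relaxation of $I$ with the additional constraint $d_w=0$ is strictly larger than $LP(I)$. Then: (1) the assignment $d_v=1/2$ for $v\in N(T)$ and $d_v=0$ for $v\in V\setminus (T\cup N(T))$ is an optimal solution to the LP-relaxation of $I$; (2) for every terminal $t\in T$, the set $N(t)$ is the unique minimum separating cut of $t$.
   Context: A Node Multiway Cut instance $I=(G,T,k)$ consists of a simple undirected graph $G=(V,E)$, a set $T\subseteq V$ of terminals and an integer $k$; it is a YES-instance iff there is a set $X\subseteq V\setminus T$ with $|X|\le k$ such that every path in $G$ between two distinct terminals contains a vertex of $X$. Let $\mathcal P(I)$ be the set of all simple paths in $G$ connecting two distinct terminals. The LP-relaxation of $I$ is: minimize $\sum_{v\in V\setminus T} d_v$ subject to $\sum_{v\in V(P)\setminus T} d_v\ge 1$ for every $P\in\mathcal P(I)$ and $d_v\ge 0$ for all $v\in V\setminus T$. $LP(I)$ denotes its optimum value and $p(I)=k-LP(I)$. $N(v)$ is the set of neighbours of $v$, $N(S)=\bigcup_{v\in S}N(v)\setminus S$. For $t\in T$, a separating cut of $t$ is a set $S\subseteq V\setminus T$ such that $t$ is disconnected from $T\setminus\{t\}$ in $G-S$. *)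

theory Defs
  imports Complex_Main
begin

definition simple_graph :: "'a set \<Rightarrow> ('a \<Rightarrow> 'a \<Rightarrow> bool) \<Rightarrow> bool" where
  "simple_graph V E \<longleftrightarrow> finite V \<and> (\<forall>u v. E u v \<longrightarrow> E v u) \<and> (\<forall>v. \<not> E v v)
     \<and> (\<forall>u v. E u v \<longrightarrow> u \<in> V \<and> v \<in> V)"

definition nbr :: "('a \<Rightarrow> 'a \<Rightarrow> bool) \<Rightarrow> 'a \<Rightarrow> 'a set" where
  "nbr E v = {u. E v u}"

definition nbr_set :: "('a \<Rightarrow> 'a \<Rightarrow> bool) \<Rightarrow> 'a set \<Rightarrow> 'a set" where
  "nbr_set E S = (\<Union>v\<in>S. nbr E v) - S"

definition term_paths :: "'a set \<Rightarrow> ('a \<Rightarrow> 'a \<Rightarrow> bool) \<Rightarrow> 'a set \<Rightarrow> 'a list set" where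
  "term_paths V E T = {xs. distinct xs \<and> xs \<noteq> [] \<and> set xs \<subseteq> V
      \<and> (\<forall>i. Suc i < length xs \<longrightarrow> E (xs ! i) (xs ! Suc i))
      \<and> hd xs \<in> T \<and> last xs \<in> T \<and> hd xs \<noteq> last xs}"

text \<open>Feasible solutions of the LP relaxation, with the additional constraints
  d_z = 0 for z in Z (Z = {} gives the plain LP relaxation).  Only the values of
  d on V - T matter.\<close>
definition lp_feasible :: "'a set \<Rightarrow> ('a \<Rightarrow> 'a \<Rightarrow> bool) \<Rightarrow> 'a set \<Rightarrow> 'a set \<Rightarrow> ('a \<Rightarrow> real) \<Rightarrow> bool" where
  "lp_feasible V E T Z d \<longleftrightarrow> (\<forall>v\<in>V - T. d v \<ge> 0)
     \<and> (\<forall>P\<in>term_paths V E T. (\<Sum>v\<in>set P - T. d v) \<ge> 1)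
     \<and> (\<forall>z\<in>Z. d z = 0)"

definition lp_obj :: "'a set \<Rightarrow> 'a set \<Rightarrow> ('a \<Rightarrow> real) \<Rightarrow> real" where
  "lp_obj V T d = (\<Sum>v\<in>V - T. d v)"

definition lp_val :: "'a set \<Rightarrow> ('a \<Rightarrow> 'a \<Rightarrow> bool) \<Rightarrow> 'a set \<Rightarrow> 'a set \<Rightarrow> real" where
  "lp_val V E T Z = Inf {lp_obj V T d | d. lp_feasible V E T Z d}"

definition LP :: "'a set \<Rightarrow> ('a \<Rightarrow> 'a \<Rightarrow> bool) \<Rightarrow> 'a set \<Rightarrow> real" where
  "LP V E T = lp_val V E T {}"

definition lp_optimal :: "'a set \<Rightarrow> ('a \<Rightarrow> 'a \<Rightarrow> bool) \<Rightarrow> 'a set \<Rightarrow> ('a \<Rightarrow> real) \<Rightarrow> bool" where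
  "lp_optimal V E T d \<longleftrightarrow> lp_feasible V E T {} d \<and> lp_obj V T d = LP V E T"

definition pI :: "'a set \<Rightarrow> ('a \<Rightarrow> 'a \<Rightarrow> bool) \<Rightarrow> 'a set \<Rightarrow> int \<Rightarrow> real" where
  "pI V E T k = real_of_int k - LP V E T"

definition connected_in :: "'a set \<Rightarrow> ('a \<Rightarrow> 'a \<Rightarrow> bool) \<Rightarrow> 'a set \<Rightarrow> 'a \<Rightarrow> 'a \<Rightarrow> bool" where
  "connected_in V E S u v \<longleftrightarrow> u \<in> V - S \<and> v \<in> V - S \<and>
     (\<lambda>x y. E x y \<and> x \<in> V - S \<and> y \<in> V - S)\<^sup>*\<^sup>* u v"

definition separating_cut :: "'a set \<Rightarrow> ('a \<Rightarrow> 'a \<Rightarrow> bool) \<Rightarrow> 'a set \<Rightarrow> 'a \<Rightarrow> 'a set \<Rightarrow> bool" where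
  "separating_cut V E T t S \<longleftrightarrow> S \<subseteq> V - T \<and>
     (\<forall>t'\<in>T - {t}. \<not> connected_in V E S t t')"

definition unique_min_separating_cut :: "'a set \<Rightarrow> ('a \<Rightarrow> 'a \<Rightarrow> bool) \<Rightarrow> 'a set \<Rightarrow> 'a \<Rightarrow> 'a set \<Rightarrow> bool" where
  "unique_min_separating_cut V E T t S \<longleftrightarrow> separating_cut V E T t S \<and>
     (\<forall>S'. separating_cut V E T t S' \<and> card S' \<le> card S \<longrightarrow> S' = S)"

end

theory Submission imports Defs "HOL-Analysis.Analysis" begin

fun ch :: "('a \<Rightarrow> 'a \<Rightarrow> bool) \<Rightarrow> 'a list \<Rightarrow> bool" where
  "ch R [] = True" | "ch R [x] = True" | "ch R (x#y#ys) = (R x y \<and> ch R (y#ys))"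

lemma ch_Cons: "ch R (x#xs) \<longleftrightarrow> ch R xs \<and> (xs \<noteq> [] \<longrightarrow> R x (hd xs))"
  by (cases xs) auto

lemma ch_append: "ch R (xs @ ys) \<longleftrightarrow> ch R xs \<and> ch R ys \<and> (xs \<noteq> [] \<longrightarrow> ys \<noteq> [] \<longrightarrow> R (last xs) (hd ys))"
  by (induction xs) (auto simp: ch_Cons)

lemma ch_rev: assumes "\<And>x y. R x y \<Longrightarrow> R y x" shows "ch R xs \<Longrightarrow> ch R (rev xs)"
  by (induction xs) (auto simp: ch_Cons ch_append hd_rev last_rev assms)

lemma ch_mono: "ch R xs \<Longrightarrow> (\<And>x y. R x y \<Longrightarrow> R' x y) \<Longrightarrow> ch R' xs"
  by (induction R xs rule: ch.induct) auto

lemma ch_distinct: "ch (\<lambda>x y. R x y \<or> x = y) xs \<Longrightarrow> distinct xs \<Longrightarrow> ch R xs"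
  by (induction "\<lambda>x y. R x y \<or> x = y" xs rule: ch.induct) auto

lemma ch_idx: "(\<forall>i. Suc i < length xs \<longrightarrow> R (xs ! i) (xs ! Suc i)) \<longleftrightarrow> ch R xs"
proof (induction xs)
  case Nil then show ?case by simp
next
  case (Cons x xs)
  show ?case
  proof (cases xs)
    case Nil then show ?thesis by simp
  next
    case (Cons y ys)
    have "(\<forall>i. Suc i < length (x#xs) \<longrightarrow> R ((x#xs) ! i) ((x#xs) ! Suc i))
       \<longleftrightarrow> R x y \<and> (\<forall>i. Suc i < length xs \<longrightarrow> R (xs ! i) (xs ! Suc i))"
      using Cons apply (auto)
      subgoal for i by (cases i) auto
      done
    then show ?thesis using Cons.IH Cons by simp
  qed
qed

lemma ch_cross: "ch R P \<Longrightarrow> P \<noteq> [] \<Longrightarrow> hd P \<in> A \<Longrightarrow> last P \<notin> A \<Longrightarrow> \<exists>u\<in>A. \<exists>v\<in>set P. v \<notin> A \<and> R u v"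
proof (induction R P rule: ch.induct)
  case (3 R x y ys)
  then show ?case by (cases "y \<in> A") auto
qed auto

lemma ch_rtranclp: "ch E P \<Longrightarrow> P \<noteq> [] \<Longrightarrow> set P \<subseteq> B \<Longrightarrow> (\<lambda>x y. E x y \<and> x \<in> B \<and> y \<in> B)\<^sup>*\<^sup>* (hd P) (last P)"
proof (induction E P rule: ch.induct)
  case (3 R x y ys)
  then have "(\<lambda>x y. R x y \<and> x \<in> B \<and> y \<in> B)\<^sup>*\<^sup>* y (last (y#ys))" by simp
  then show ?case using 3 by (auto intro: converse_rtranclp_into_rtranclp)
qed auto

definition walks :: "'a set \<Rightarrow> ('a \<Rightarrow> 'a \<Rightarrow> bool) \<Rightarrow> 'a \<Rightarrow> 'a \<Rightarrow> 'a list set" where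
  "walks V E a b = {W. W \<noteq> [] \<and> set W \<subseteq> V \<and> ch (\<lambda>x y. E x y \<or> x = y) W \<and> hd W = a \<and> last W = b}"

lemma walk_to_path: "W \<in> walks V E a b \<Longrightarrow> \<exists>P. distinct P \<and> P \<in> walks V E a b \<and> set P \<subseteq> set W"
proof (induction "length W" arbitrary: W rule: less_induct)
  case less
  show ?case
  proof (cases "distinct W")
    case True then show ?thesis using less by auto
  next
    case False
    then obtain xs ys zs y where W: "W = xs@[y]@ys@[y]@zs" using not_distinct_decomp by blast
    let ?W = "xs @ [y] @ zs"
    have c: "ch (\<lambda>x y. E x y \<or> x = y) W" using less(2) by (simp add: walks_def)
    have "ch (\<lambda>x y. E x y \<or> x = y) ((xs@[y]) @ (ys@[y]@zs))" using c W by simp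
    then have c1: "ch (\<lambda>x y. E x y \<or> x = y) (xs@[y])" unfolding ch_append by blast
    have "ch (\<lambda>x y. E x y \<or> x = y) ((xs@[y]@ys) @ (y#zs))" using c W by simp
    then have c2: "ch (\<lambda>x y. E x y \<or> x = y) (y#zs)" unfolding ch_append by blast
    have "ch (\<lambda>x y. E x y \<or> x = y) ((xs@[y]) @ zs)" using c1 c2 unfolding ch_append ch_Cons by auto
    then have "?W \<in> walks V E a b" using less(2) W by (auto simp: walks_def hd_append last_append split: if_splits)
    moreover have "length ?W < length W" using W by simp
    ultimately obtain P where "distinct P \<and> P \<in> walks V E a b \<and> set P \<subseteq> set ?W" using less(1) by blast
    then show ?thesis using W by auto
  qed
qed


lemma term_paths_iff: "P \<in> term_paths V E T \<longleftrightarrow> distinct P \<and> P \<noteq> [] \<and> set P \<subseteq> V \<and> ch E P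
   \<and> hd P \<in> T \<and> last P \<in> T \<and> hd P \<noteq> last P"
  unfolding term_paths_def ch_idx by blast

locale rnd =
  fixes V :: "'a set" and E T and d :: "'a \<Rightarrow> real"
  assumes graph: "simple_graph V E" and TV: "T \<subseteq> V" and feas: "lp_feasible V E T {} d"
begin

lemma finV: "finite V" using graph by (simp add: simple_graph_def)
lemma Esym: "E x y \<Longrightarrow> E y x" using graph by (simp add: simple_graph_def)
lemma EV: "E x y \<Longrightarrow> x \<in> V \<and> y \<in> V" using graph by (simp add: simple_graph_def)
lemma finT: "finite T" using finV TV finite_subset by blast
lemma dnn: "v \<in> V - T \<Longrightarrow> 0 \<le> d v" using feas by (simp add: lp_feasible_def)

definition cst :: "'a set \<Rightarrow> real" where "cst S = (\<Sum>x\<in>S - T. d x)"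

lemma cst_mono: "S \<subseteq> S' \<Longrightarrow> S' \<subseteq> V \<Longrightarrow> cst S \<le> cst S'"
  unfolding cst_def
  by (rule sum_mono2) (auto intro: finite_subset[OF _ finV] dnn)

lemma cst_nn: "S \<subseteq> V \<Longrightarrow> 0 \<le> cst S"
  unfolding cst_def by (rule sum_nonneg) (auto intro: dnn)

lemma cst_ge: "S \<subseteq> V \<Longrightarrow> v \<in> S - T \<Longrightarrow> d v \<le> cst S"
  unfolding cst_def
  by (rule member_le_sum) (auto intro: finite_subset[OF _ finV] dnn)

lemma cst_insertT: "v \<in> T \<Longrightarrow> cst (insert v S) = cst S"
  unfolding cst_def by (simp add: insert_Diff_if)

lemma cst_insert: "S \<subseteq> V \<Longrightarrow> v \<in> V - T \<Longrightarrow> cst (insert v S) \<le> cst S + d v"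
  using dnn[of v] finite_subset[OF _ finV, of S]
  by (cases "v \<in> S") (auto simp: cst_def insert_absorb insert_Diff_if)

lemma walk_single: "a \<in> V \<Longrightarrow> [a] \<in> walks V E a a"
  by (simp add: walks_def)

lemma walk_snoc: "W \<in> walks V E t u \<Longrightarrow> E u v \<Longrightarrow> W @ [v] \<in> walks V E t v"
  using EV[of u v] by (auto simp: walks_def ch_append)

lemma walk_app: "W \<in> walks V E t v \<Longrightarrow> W' \<in> walks V E t' v \<Longrightarrow> W @ rev W' \<in> walks V E t t'"
proof -
  assume W: "W \<in> walks V E t v" and W': "W' \<in> walks V E t' v"
  have "ch (\<lambda>x y. E x y \<or> x = y) (rev W')"
    by (rule ch_rev) (use W' Esym in \<open>auto simp: walks_def\<close>)
  then show ?thesis using W W' by (auto simp: walks_def ch_append hd_rev last_rev)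
qed

lemma walk_cost: "a \<in> T \<Longrightarrow> b \<in> T \<Longrightarrow> a \<noteq> b \<Longrightarrow> W \<in> walks V E a b \<Longrightarrow> 1 \<le> cst (set W)"
proof -
  assume a: "a \<in> T" "b \<in> T" "a \<noteq> b" "W \<in> walks V E a b"
  then obtain P where P: "distinct P" "P \<in> walks V E a b" "set P \<subseteq> set W" using walk_to_path[OF a(4)] by blast
  have Pw: "P \<noteq> []" "set P \<subseteq> V" "ch (\<lambda>x y. E x y \<or> x = y) P" "hd P = a" "last P = b"
    using P(2) unfolding walks_def by simp_all
  have "ch E P" using ch_distinct[OF Pw(3) P(1)] .
  then have "P \<in> term_paths V E T" using a P(1) Pw unfolding term_paths_iff by simp
  then have "1 \<le> cst (set P)" using feas unfolding lp_feasible_def cst_def by blast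
  also have "\<dots> \<le> cst (set W)" using P(3) a(4) unfolding walks_def by (intro cst_mono) simp_all
  finally show ?thesis .
qed

definition inball :: "'a \<Rightarrow> real \<Rightarrow> 'a set" where
  "inball t r = {v. \<exists>W \<in> walks V E t v. cst (set W) < r}"
definition bd :: "'a \<Rightarrow> real \<Rightarrow> 'a set" where
  "bd t r = {v \<in> V - T. v \<notin> inball t r \<and> (\<exists>u \<in> inball t r. E u v)}"
definition CC :: "real \<Rightarrow> 'a \<Rightarrow> 'a set" where
  "CC r v = {t \<in> T. v \<in> bd t r}"
definition h :: "real \<Rightarrow> 'a \<Rightarrow> real" where
  "h r v = (if v \<in> V - T then min 1 (real (card (CC r v)) / 2) else 0)"

definition Hs :: "('a \<Rightarrow> real) set" where
  "Hs = {f. \<forall>x. (x \<in> V - T \<longrightarrow> f x \<in> {0, 1/2, 1}) \<and> (x \<notin> V - T \<longrightarrow> f x = 0)}"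

lemma finite_Hs: "finite Hs"
  unfolding Hs_def by (rule finite_set_of_finite_funs) (use finV in auto)

lemma h_Hs: "h r \<in> Hs"
proof -
  have "min 1 (real n / 2) \<in> {0, 1/2, 1}" for n :: nat
    by (cases n; cases "n - 1") auto
  then show ?thesis by (auto simp: Hs_def h_def)
qed

lemma finCC: "finite (CC r v)" using finT by (simp add: CC_def)

lemma cross_term:
  assumes P: "P \<in> term_paths V E T" and r: "0 < r" "r \<le> 1/2"
  shows "\<exists>x \<in> set P. x \<in> bd (hd P) r"
proof -
  let ?a = "hd P" and ?b = "last P"
  have Pp: "distinct P" "P \<noteq> []" "set P \<subseteq> V" "ch E P" "?a \<in> T" "?b \<in> T" "?a \<noteq> ?b"
    using P by (auto simp: term_paths_iff)
  have aV: "?a \<in> V" using Pp TV by auto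
  have "?a \<in> inball ?a r" unfolding inball_def
    using walk_single[OF aV] r Pp(5) by (intro CollectI bexI[of _ "[?a]"]) (auto simp: cst_def)
  moreover have "?b \<notin> inball ?a r"
  proof
    assume "?b \<in> inball ?a r"
    then obtain W where "W \<in> walks V E ?a ?b" "cst (set W) < r" by (auto simp: inball_def)
    then show False using walk_cost[of ?a ?b W] Pp r by auto
  qed
  ultimately obtain u x where ux: "u \<in> inball ?a r" "x \<in> set P" "x \<notin> inball ?a r" "E u x"
    using ch_cross[OF Pp(4) Pp(2)] by blast
  have "x \<notin> T"
  proof
    assume xT: "x \<in> T"
    obtain W where W: "W \<in> walks V E ?a u" "cst (set W) < r" using ux(1) by (auto simp: inball_def)
    have W': "W @ [x] \<in> walks V E ?a x" using walk_snoc[OF W(1) ux(4)] .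
    have "cst (set (W @ [x])) = cst (set W)" using cst_insertT[OF xT] by simp
    moreover have "x \<noteq> ?a" using ux \<open>?a \<in> inball ?a r\<close> by auto
    ultimately show False using walk_cost[OF Pp(5) xT _ W'] W r by auto
  qed
  then have "x \<in> bd ?a r" using ux Pp(3) by (auto simp: bd_def)
  then show ?thesis using ux by auto
qed

lemma h_feasible:
  assumes r: "0 < r" "r \<le> 1/2"
  shows "lp_feasible V E T {} (h r)"
  unfolding lp_feasible_def
proof (intro conjI ballI)
  fix v assume "v \<in> V - T" then show "0 \<le> h r v" by (simp add: h_def)
next
  fix P assume P: "P \<in> term_paths V E T"
  have Pp: "distinct P" "P \<noteq> []" "set P \<subseteq> V" "ch E P" "hd P \<in> T" "last P \<in> T" "hd P \<noteq> last P"
    using P by (auto simp: term_paths_iff)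
  have "ch E (rev P)" by (rule ch_rev[OF Esym Pp(4)])
  then have rP: "rev P \<in> term_paths V E T" using Pp
    unfolding term_paths_iff by (simp add: hd_rev last_rev)
  obtain x where x: "x \<in> set P" "x \<in> bd (hd P) r" using cross_term[OF P r] by blast
  obtain y where y: "y \<in> set P" "y \<in> bd (last P) r" using cross_term[OF rP r] by (auto simp: hd_rev)
  have xT: "x \<in> set P - T" "y \<in> set P - T" using x y by (auto simp: bd_def)
  have fin: "finite (set P - T)" by simp
  have nn: "\<And>v. v \<in> set P - T \<Longrightarrow> 0 \<le> h r v" by (simp add: h_def)
  have c1: "1 \<le> card (CC r x)" "1 \<le> card (CC r y)"
    using x y Pp finCC[of r x] finCC[of r y]
    by (auto simp: CC_def intro!: Suc_leI card_gt_0_iff[THEN iffD2])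
  have hx: "1/2 \<le> h r x" "1/2 \<le> h r y" using c1 xT Pp(3) by (auto simp: h_def)
  show "1 \<le> (\<Sum>v\<in>set P - T. h r v)"
  proof (cases "x = y")
    case True
    then have "{hd P, last P} \<subseteq> CC r x" using x y Pp by (auto simp: CC_def)
    then have "card {hd P, last P} \<le> card (CC r x)" using finCC by (rule card_mono[rotated])
    then have "2 \<le> card (CC r x)" using Pp(7) by simp
    then have "h r x = 1" using xT Pp(3) by (auto simp: h_def)
    moreover have "h r x \<le> (\<Sum>v\<in>set P - T. h r v)"
      by (rule member_le_sum) (use xT(1) nn fin in auto)
    ultimately show ?thesis by simp
  next
    case False
    have "h r x + h r y = (\<Sum>v\<in>{x,y}. h r v)" using False by simp
    also have "\<dots> \<le> (\<Sum>v\<in>set P - T. h r v)"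
      using xT by (intro sum_mono2 fin) (auto intro: nn)
    finally show ?thesis using hx by simp
  qed
qed auto

definition dst :: "'a \<Rightarrow> 'a \<Rightarrow> real" where
  "dst t v = Min ((\<lambda>W. cst (set W)) ` walks V E t v)"

lemma fin_costs: "finite ((\<lambda>W. cst (set W)) ` walks V E t v)"
proof (rule finite_subset)
  show "(\<lambda>W. cst (set W)) ` walks V E t v \<subseteq> cst ` Pow V" by (auto simp: walks_def)
  show "finite (cst ` Pow V)" using finV by simp
qed

lemma dst_le: "W \<in> walks V E t v \<Longrightarrow> dst t v \<le> cst (set W)"
  unfolding dst_def by (rule Min_le[OF fin_costs]) simp

lemma dst_ex: "walks V E t v \<noteq> {} \<Longrightarrow> \<exists>W \<in> walks V E t v. cst (set W) = dst t v"
proof -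
  assume "walks V E t v \<noteq> {}"
  then have "dst t v \<in> (\<lambda>W. cst (set W)) ` walks V E t v"
    unfolding dst_def by (intro Min_in fin_costs) simp
  then show ?thesis by force
qed

lemma F1:
  assumes "t \<in> CC r v"
  shows "walks V E t v \<noteq> {} \<and> dst t v - d v < r \<and> r \<le> dst t v"
proof -
  have vb: "v \<in> bd t r" using assms by (simp add: CC_def)
  then have v: "v \<in> V - T" "v \<notin> inball t r" by (auto simp: bd_def)
  obtain u where u: "u \<in> inball t r" "E u v" using vb by (auto simp: bd_def)
  obtain W where W: "W \<in> walks V E t u" "cst (set W) < r" using u(1) by (auto simp: inball_def)
  have W': "W @ [v] \<in> walks V E t v" by (rule walk_snoc[OF W(1) u(2)])
  have "cst (set (W @ [v])) \<le> cst (set W) + d v"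
    using cst_insert[of "set W" v] v W(1) by (simp add: walks_def)
  then have 1: "dst t v < r + d v" using dst_le[OF W'] W(2) by simp
  have ne: "walks V E t v \<noteq> {}" using W' by auto
  obtain W0 where "W0 \<in> walks V E t v" "cst (set W0) = dst t v" using dst_ex[OF ne] by blast
  then have "r \<le> dst t v" using v(2) unfolding inball_def by force
  then show ?thesis using 1 ne by simp
qed

lemma F2: "v \<in> V - T \<Longrightarrow> walks V E t v \<noteq> {} \<Longrightarrow> d v \<le> dst t v"
proof -
  assume v: "v \<in> V - T" and ne: "walks V E t v \<noteq> {}"
  obtain W where W: "W \<in> walks V E t v" "cst (set W) = dst t v" using dst_ex[OF ne] by blast
  have "v \<in> set W" using W(1) by (auto simp: walks_def)
  then have "d v \<le> cst (set W)" using v W(1) by (intro cst_ge) (auto simp: walks_def)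
  then show ?thesis using W by simp
qed

lemma F3:
  assumes v: "v \<in> V - T" and t: "t \<in> T" "t' \<in> T" "t \<noteq> t'"
    and ne: "walks V E t v \<noteq> {}" "walks V E t' v \<noteq> {}"
  shows "1 \<le> dst t v + dst t' v - d v"
proof -
  obtain W where W: "W \<in> walks V E t v" "cst (set W) = dst t v" using dst_ex[OF ne(1)] by blast
  obtain W' where W': "W' \<in> walks V E t' v" "cst (set W') = dst t' v" using dst_ex[OF ne(2)] by blast
  have 1: "1 \<le> cst (set (W @ rev W'))" by (rule walk_cost[OF t walk_app[OF W(1) W'(1)]])
  let ?A = "set W" and ?B = "set W'"
  have AV: "?A \<subseteq> V" "?B \<subseteq> V" using W W' by (auto simp: walks_def)
  have fA: "finite (?A - T)" "finite (?B - T)" by auto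
  have "cst (?A \<union> ?B) + cst (?A \<inter> ?B) = cst ?A + cst ?B"
  proof -
    have e1: "(?A \<union> ?B) - T = (?A - T) \<union> (?B - T)" and e2: "(?A \<inter> ?B) - T = (?A - T) \<inter> (?B - T)" by auto
    show ?thesis unfolding cst_def e1 e2 by (rule sum.union_inter[OF fA])
  qed
  moreover have "W \<noteq> []" "last W = v" "W' \<noteq> []" "last W' = v" using W W' by (auto simp: walks_def)
  then have "v \<in> ?A" "v \<in> ?B" by (metis last_in_set)+
  then have "d v \<le> cst (?A \<inter> ?B)" using v AV by (intro cst_ge) auto
  ultimately show ?thesis using 1 W W' by simp
qed

lemma arith_bound:
  fixes a dv :: real
  assumes "0 \<le> a" "0 \<le> dv"
  shows "(max a (min (a + dv) (1/2)) - a) + (max (max a (1 - dv - a)) (1/2) - max a (1 - dv - a)) \<le> dv"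
  using assms by (simp add: max_def min_def)

lemma pv:
  assumes v: "v \<in> V - T"
  shows "\<exists>S1 S2. S1 \<in> sets lborel \<and> S2 \<in> sets lborel
     \<and> (\<forall>r\<in>{0<..1/2}. 2 * h r v \<le> indicator S1 r + indicator S2 r)
     \<and> emeasure lborel S1 + emeasure lborel S2 \<le> ennreal (d v)"
proof -
  let ?R = "{t \<in> T. walks V E t v \<noteq> {}}"
  have CCR: "CC r v \<subseteq> ?R" for r using F1 by (auto simp: CC_def)
  show ?thesis
  proof (cases "?R = {}")
    case True
    then have "CC r v = {}" for r using CCR[of r] by auto
    then have "2 * h r v \<le> indicator {} r + indicator {} r" for r by (simp add: h_def)
    then show ?thesis by (intro exI[of _ "{}"]) auto
  next
    case False
    have "finite ((\<lambda>t. dst t v) ` ?R)" using finT by simp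
    then obtain m where "m \<in> (\<lambda>t. dst t v) ` ?R" "\<not> (\<exists>x\<in>(\<lambda>t. dst t v) ` ?R. x < m)"
      using ex_min_if_finite[of "(\<lambda>t. dst t v) ` ?R"] False by blast
    then obtain t1 where t1: "t1 \<in> ?R" and t1min: "\<And>t. t \<in> ?R \<Longrightarrow> dst t1 v \<le> dst t v"
      by (force simp: not_less)
    define a where "a = dst t1 v - d v"
    define b where "b = max a (1 - d v - a)"
    define S1 where "S1 = {a<..max a (min (a + d v) (1/2))}"
    define S2 where "S2 = {b<..max b (1/2)}"
    have a0: "0 \<le> a" using F2[OF v] t1 by (simp add: a_def)
    have d0: "0 \<le> d v" using dnn[OF v] .
    have pw: "2 * h r v \<le> indicator S1 r + indicator S2 r" if r: "r \<in> {0<..1/2}" for r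
    proof (cases "\<exists>t \<in> CC r v. t \<noteq> t1")
      case True
      then obtain t where t: "t \<in> CC r v" "t \<noteq> t1" by blast
      have tR: "t \<in> ?R" using CCR t by blast
      have f1: "dst t v - d v < r" "r \<le> dst t v" using F1[OF t(1)] by auto
      have f3: "1 \<le> dst t1 v + dst t v - d v" using F3[OF v _ _ _ _] t1 tR t(2) by auto
      have mn: "dst t1 v \<le> dst t v" using t1min tR by blast
      have "r \<in> S1" using f1 f3 mn r unfolding S1_def a_def by auto
      moreover have "r \<in> S2" using f1 f3 mn r unfolding S2_def b_def a_def by auto
      moreover have "2 * h r v \<le> 2" by (simp add: h_def)
      ultimately show ?thesis by simp
    next
      case False
      then have sub: "CC r v \<subseteq> {t1}" by blast
      show ?thesis
      proof (cases "t1 \<in> CC r v")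
        case True
        then have "CC r v = {t1}" using sub by blast
        moreover have "r \<in> S1" using F1[OF True] r unfolding S1_def a_def by auto
        ultimately show ?thesis using v by (simp add: h_def indicator_def)
      next
        case False
        then have "CC r v = {}" using sub by blast
        then show ?thesis using v by (simp add: h_def indicator_def)
      qed
    qed
    have m1: "emeasure lborel S1 = ennreal (max a (min (a + d v) (1/2)) - a)"
      unfolding S1_def by (rule emeasure_lborel_Ioc) simp
    have m2: "emeasure lborel S2 = ennreal (max b (1/2) - b)"
      unfolding S2_def by (rule emeasure_lborel_Ioc) simp
    have "emeasure lborel S1 + emeasure lborel S2 = ennreal ((max a (min (a + d v) (1/2)) - a) + (max b (1/2) - b))"
      unfolding m1 m2 by (rule ennreal_plus[symmetric]) auto
    also have "\<dots> \<le> ennreal (d v)"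
      using arith_bound[OF a0 d0] unfolding b_def by (intro ennreal_leI) simp
    finally have mm: "emeasure lborel S1 + emeasure lborel S2 \<le> ennreal (d v)" .
    moreover have "S1 \<in> sets lborel" "S2 \<in> sets lborel" unfolding S1_def S2_def by simp_all
    ultimately show ?thesis using pw by blast
  qed
qed

lemma h_nn: "0 \<le> h r v" by (simp add: h_def)

lemma rounding: "\<exists>f \<in> Hs. lp_feasible V E T {} f \<and> lp_obj V T f \<le> lp_obj V T d"
proof -
  let ?I = "{0<..1/2::real}"
  have "\<forall>v \<in> V - T. \<exists>S. fst S \<in> sets lborel \<and> snd S \<in> sets lborel
     \<and> (\<forall>r\<in>?I. 2 * h r v \<le> indicator (fst S) r + indicator (snd S) r)
     \<and> emeasure lborel (fst S) + emeasure lborel (snd S) \<le> ennreal (d v)"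
  proof
    fix v assume "v \<in> V - T"
    then obtain S1 S2 where "S1 \<in> sets lborel \<and> S2 \<in> sets lborel
     \<and> (\<forall>r\<in>?I. 2 * h r v \<le> indicator S1 r + indicator S2 r)
     \<and> emeasure lborel S1 + emeasure lborel S2 \<le> ennreal (d v)" using pv by blast
    then show "\<exists>S. fst S \<in> sets lborel \<and> snd S \<in> sets lborel
     \<and> (\<forall>r\<in>?I. 2 * h r v \<le> indicator (fst S) r + indicator (snd S) r)
     \<and> emeasure lborel (fst S) + emeasure lborel (snd S) \<le> ennreal (d v)"
      by (intro exI[of _ "(S1, S2)"]) simp
  qed
  then obtain S where S: "\<forall>v \<in> V - T. fst (S v) \<in> sets lborel \<and> snd (S v) \<in> sets lborel
     \<and> (\<forall>r\<in>?I. 2 * h r v \<le> indicator (fst (S v)) r + indicator (snd (S v)) r)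
     \<and> emeasure lborel (fst (S v)) + emeasure lborel (snd (S v)) \<le> ennreal (d v)"
    by (rule bchoice[elim_format]) blast
  define S1 where "S1 v = fst (S v)" for v
  define S2 where "S2 v = snd (S v)" for v
  have fin: "finite ((\<lambda>r. lp_obj V T (h r)) ` ?I)"
  proof (rule finite_subset)
    show "(\<lambda>r. lp_obj V T (h r)) ` ?I \<subseteq> lp_obj V T ` Hs" using h_Hs by auto
    show "finite (lp_obj V T ` Hs)" using finite_Hs by simp
  qed
  have "(1/2::real) \<in> ?I" by simp
  then obtain m where "m \<in> (\<lambda>r. lp_obj V T (h r)) ` ?I" "\<not> (\<exists>x\<in>(\<lambda>r. lp_obj V T (h r)) ` ?I. x < m)"
    using ex_min_if_finite[OF fin] by blast
  then obtain r0 where r0: "r0 \<in> ?I" and r0min: "\<And>r. r \<in> ?I \<Longrightarrow> lp_obj V T (h r0) \<le> lp_obj V T (h r)"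
    by (force simp: not_less)
  define ob where "ob = lp_obj V T (h r0)"
  have ob0: "0 \<le> ob" unfolding ob_def lp_obj_def by (rule sum_nonneg) (simp add: h_nn)
  have dobj0: "0 \<le> lp_obj V T d" unfolding lp_obj_def by (rule sum_nonneg) (simp add: dnn)
  have finVT: "finite (V - T)" using finV by simp
  have e: "emeasure lborel ?I = ennreal (1/2)" by simp
  have "ennreal ob = ennreal (2 * ob) * emeasure lborel ?I"
    unfolding e using ob0 by (subst ennreal_mult[symmetric]) auto
  also have "\<dots> = (\<integral>\<^sup>+ r. ennreal (2 * ob) * indicator ?I r \<partial>lborel)"
    by (rule nn_integral_cmult_indicator[symmetric]) simp
  also have "\<dots> \<le> (\<integral>\<^sup>+ r. (\<Sum>v\<in>V - T. indicator (S1 v) r + indicator (S2 v) r) \<partial>lborel)"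
  proof (rule nn_integral_mono)
    fix r :: real
    show "ennreal (2 * ob) * indicator ?I r \<le> (\<Sum>v\<in>V - T. indicator (S1 v) r + indicator (S2 v) r)"
    proof (cases "r \<in> ?I")
      case False then show ?thesis by simp
    next
      case True
      have "2 * ob \<le> 2 * lp_obj V T (h r)" using r0min[OF True] ob_def by simp
      also have "\<dots> = (\<Sum>v\<in>V - T. 2 * h r v)" by (simp add: lp_obj_def sum_distrib_left)
      also have "\<dots> \<le> (\<Sum>v\<in>V - T. indicator (S1 v) r + indicator (S2 v) r)"
        using S True unfolding S1_def S2_def by (intro sum_mono) blast
      finally have le: "2 * ob \<le> (\<Sum>v\<in>V - T. (indicator (S1 v) r + indicator (S2 v) r :: real))" .
      have "ennreal (2 * ob) \<le> ennreal (\<Sum>v\<in>V - T. (indicator (S1 v) r + indicator (S2 v) r :: real))"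
        using le by (rule ennreal_leI)
      also have "\<dots> = (\<Sum>v\<in>V - T. ennreal (indicator (S1 v) r + indicator (S2 v) r :: real))"
        by (rule sum_ennreal[symmetric]) simp
      also have "\<dots> = (\<Sum>v\<in>V - T. indicator (S1 v) r + indicator (S2 v) r)"
        by (simp add: ennreal_plus ennreal_indicator)
      finally show ?thesis using True by simp
    qed
  qed
  also have "\<dots> = (\<Sum>v\<in>V - T. emeasure lborel (S1 v) + emeasure lborel (S2 v))"
  proof -
    have m: "S1 v \<in> sets lborel" "S2 v \<in> sets lborel" if "v \<in> V - T" for v
      using S that unfolding S1_def S2_def by blast+
    have "(\<integral>\<^sup>+ r. (\<Sum>v\<in>V - T. indicator (S1 v) r + indicator (S2 v) r) \<partial>lborel)
        = (\<Sum>v\<in>V - T. (\<integral>\<^sup>+ r. indicator (S1 v) r + indicator (S2 v) r \<partial>lborel))"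
      by (rule nn_integral_sum) (use m in auto)
    also have "\<dots> = (\<Sum>v\<in>V - T. emeasure lborel (S1 v) + emeasure lborel (S2 v))"
      by (rule sum.cong) (use m in \<open>auto simp: nn_integral_add\<close>)
    finally show ?thesis .
  qed
  also have "\<dots> \<le> (\<Sum>v\<in>V - T. ennreal (d v))"
    using S unfolding S1_def S2_def by (intro sum_mono) blast
  also have "\<dots> = ennreal (lp_obj V T d)"
    unfolding lp_obj_def by (rule sum_ennreal) (simp add: dnn)
  finally have "ob \<le> lp_obj V T d" using dobj0 by simp
  then show ?thesis using h_Hs h_feasible r0 unfolding ob_def by auto
qed

end

lemma rounding':
  assumes "simple_graph V E" "T \<subseteq> V" "lp_feasible V E T {} d"
  shows "\<exists>f. (\<forall>x. (x \<in> V - T \<longrightarrow> f x \<in> {0, 1/2, 1}) \<and> (x \<notin> V - T \<longrightarrow> f x = 0))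
     \<and> lp_feasible V E T {} f \<and> lp_obj V T f \<le> lp_obj V T d"
proof -
  interpret rnd V E T d using assms by unfold_locales
  show ?thesis using rounding unfolding Hs_def by blast
qed

lemma two_pts:
  fixes f :: "'a \<Rightarrow> real"
  assumes "finite A" "\<And>v. v \<in> A \<Longrightarrow> 0 \<le> f v" "x \<in> A" "y \<in> A"
    "x = y \<Longrightarrow> 1 \<le> f x" "x \<noteq> y \<Longrightarrow> 1/2 \<le> f x \<and> 1/2 \<le> f y"
  shows "1 \<le> sum f A"
proof (cases "x = y")
  case True
  have "f x \<le> sum f A" by (rule member_le_sum) (use assms in auto)
  then show ?thesis using assms True by simp
next
  case False
  have "f x + f y = sum f {x, y}" using False by simp
  also have "\<dots> \<le> sum f A" by (rule sum_mono2) (use assms in auto)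
  finally show ?thesis using assms False by simp
qed

lemma sum_ind: "finite B \<Longrightarrow> A \<subseteq> B \<Longrightarrow> (\<Sum>v\<in>B. if v \<in> A then c else 0) = real (card A) * (c::real)"
proof -
  assume "finite B" "A \<subseteq> B"
  then have "(\<Sum>v\<in>B. if v \<in> A then c else 0) = sum (\<lambda>_. c) (B \<inter> A)"
    using sum.inter_restrict[OF \<open>finite B\<close>, of "\<lambda>_. c" A] by simp
  also have "B \<inter> A = A" using \<open>A \<subseteq> B\<close> by auto
  finally show ?thesis by simp
qed

lemma ends1:
  assumes "P \<in> term_paths V E T"
  shows "\<exists>x\<in>set P. E (hd P) x"
proof -
  have Pp: "P \<noteq> []" "ch E P" "hd P \<noteq> last P" using assms by (auto simp: term_paths_iff)
  then obtain a b ys where P: "P = a # b # ys" by (cases P; cases "tl P") auto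
  then show ?thesis using Pp by auto
qed

lemma rev_tp:
  assumes "\<And>x y. E x y \<Longrightarrow> E y x" "P \<in> term_paths V E T"
  shows "rev P \<in> term_paths V E T"
proof -
  have Pp: "distinct P" "P \<noteq> []" "set P \<subseteq> V" "ch E P" "hd P \<in> T" "last P \<in> T" "hd P \<noteq> last P"
    using assms(2) by (auto simp: term_paths_iff)
  have "ch E (rev P)" by (rule ch_rev[OF assms(1) Pp(4)])
  then show ?thesis using Pp unfolding term_paths_iff by (simp add: hd_rev last_rev)
qed

lemma lp_val_le:
  assumes "lp_feasible V E T Z f"
  shows "lp_val V E T Z \<le> lp_obj V T f"
  unfolding lp_val_def
proof (rule cInf_lower)
  show "lp_obj V T f \<in> {lp_obj V T d |d. lp_feasible V E T Z d}" using assms by blast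
  show "bdd_below {lp_obj V T d |d. lp_feasible V E T Z d}"
    by (rule bdd_belowI[of _ 0]) (auto simp: lp_obj_def lp_feasible_def intro!: sum_nonneg)
qed

theorem mainTheorem3:
  fixes V :: "'a set" and E :: "'a \<Rightarrow> 'a \<Rightarrow> bool" and T :: "'a set" and k :: int
  assumes graph: "simple_graph V E"
    and TV: "T \<subseteq> V"
    and R1a: "\<forall>t\<in>T. \<forall>t'\<in>T. \<not> E t t'"
    and R1b: "pI V E T k \<ge> 0"
    and R2: "\<forall>v\<in>V - T. \<forall>t\<in>T. \<forall>t'\<in>T. E v t \<and> E v t' \<longrightarrow> t = t'"
    and R3: "\<forall>t\<in>T. \<forall>w\<in>nbr E t - T. lp_val V E T {w} > LP V E T"
  shows "lp_optimal V E T (\<lambda>v. if v \<in> nbr_set E T then 1/2 else 0)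
     \<and> (\<forall>t\<in>T. unique_min_separating_cut V E T t (nbr E t))"
proof -
  have finV: "finite V" using graph by (simp add: simple_graph_def)
  have Esym: "\<And>x y. E x y \<Longrightarrow> E y x" using graph by (simp add: simple_graph_def)
  have EV: "\<And>x y. E x y \<Longrightarrow> x \<in> V \<and> y \<in> V" using graph by (simp add: simple_graph_def)
  have nbrVT: "\<And>t. t \<in> T \<Longrightarrow> nbr E t \<subseteq> V - T" using EV R1a by (auto simp: nbr_def)
  define N where "N = nbr_set E T"
  have N_eq: "N = (\<Union>t\<in>T. nbr E t)" using nbrVT by (auto simp: N_def nbr_set_def)
  have NVT: "N \<subseteq> V - T" using nbrVT N_eq by auto
  define ds where "ds = (\<lambda>v::'a. if v \<in> N then 1/2 else (0::real))"
  have endsT: "\<exists>x\<in>set P - T. E (hd P) x \<and> x \<in> V" "\<exists>y\<in>set P - T. E (last P) y \<and> y \<in> V"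
    if P: "P \<in> term_paths V E T" for P
  proof -
    have Pp: "hd P \<in> T" "last P \<in> T" using P by (auto simp: term_paths_iff)
    obtain x where "x \<in> set P" "E (hd P) x" using ends1[OF P] by blast
    then show "\<exists>x\<in>set P - T. E (hd P) x \<and> x \<in> V" using R1a Pp EV by blast
    obtain y where "y \<in> set (rev P)" "E (hd (rev P)) y" using ends1[OF rev_tp[OF Esym P]] by blast
    then show "\<exists>y\<in>set P - T. E (last P) y \<and> y \<in> V" using R1a Pp EV by (auto simp: hd_rev)
  qed
  have uniq_t: "a = b" if "E a x" "E b x" "a \<in> T" "b \<in> T" "x \<in> V - T" for a b x
    using R2 that Esym by blast
  have tp: "hd P \<in> T" "last P \<in> T" "hd P \<noteq> last P" "set P \<subseteq> V" if "P \<in> term_paths V E T" for P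
    using that by (auto simp: term_paths_iff)
  have dsfeas: "lp_feasible V E T {} ds"
    unfolding lp_feasible_def
  proof (intro conjI ballI)
    fix P assume P: "P \<in> term_paths V E T"
    obtain x where x: "x \<in> set P - T" "E (hd P) x" "x \<in> V" using endsT(1)[OF P] by blast
    obtain y where y: "y \<in> set P - T" "E (last P) y" "y \<in> V" using endsT(2)[OF P] by blast
    have xN: "x \<in> N" "y \<in> N" using x y tp[OF P] by (auto simp: N_eq nbr_def)
    have "x \<noteq> y" using uniq_t[of "hd P" x "last P"] x y tp[OF P] by auto
    then show "1 \<le> (\<Sum>v\<in>set P - T. ds v)"
      using xN x y by (intro two_pts[of _ _ x y]) (auto simp: ds_def)
  qed (auto simp: ds_def)
  define F where "F = {f. (\<forall>x. (x \<in> V - T \<longrightarrow> f x \<in> {0, 1/2, 1}) \<and> (x \<notin> V - T \<longrightarrow> f x = (0::real)))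
      \<and> lp_feasible V E T {} f}"
  have finF: "finite F"
  proof (rule finite_subset)
    show "F \<subseteq> {f. \<forall>x. (x \<in> V - T \<longrightarrow> f x \<in> {0, 1/2, 1}) \<and> (x \<notin> V - T \<longrightarrow> f x = (0::real))}"
      by (auto simp: F_def)
    show "finite {f. \<forall>x. (x \<in> V - T \<longrightarrow> f x \<in> {0, 1/2, 1}) \<and> (x \<notin> V - T \<longrightarrow> f x = (0::real))}"
      by (rule finite_set_of_finite_funs) (use finV in auto)
  qed
  have dsF: "ds \<in> F" using dsfeas NVT by (auto simp: F_def ds_def)
  have "finite (lp_obj V T ` F)" using finF by simp
  then obtain m where "m \<in> lp_obj V T ` F" "\<not> (\<exists>x\<in>lp_obj V T ` F. x < m)"
    using ex_min_if_finite[of "lp_obj V T ` F"] dsF by blast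
  then obtain h0 where h0F: "h0 \<in> F" and h0min: "\<And>f. f \<in> F \<Longrightarrow> lp_obj V T h0 \<le> lp_obj V T f"
    by (force simp: not_less)
  have h0feas: "lp_feasible V E T {} h0" using h0F by (simp add: F_def)
  have LP_eq: "LP V E T = lp_obj V T h0"
  proof (rule antisym)
    show "LP V E T \<le> lp_obj V T h0" unfolding LP_def by (rule lp_val_le[OF h0feas])
    show "lp_obj V T h0 \<le> LP V E T" unfolding LP_def lp_val_def
    proof (rule cInf_greatest)
      show "{lp_obj V T d |d. lp_feasible V E T {} d} \<noteq> {}" using h0feas by blast
      fix x assume "x \<in> {lp_obj V T d |d. lp_feasible V E T {} d}"
      then obtain d where d: "x = lp_obj V T d" "lp_feasible V E T {} d" by blast
      obtain f where "(\<forall>x. (x \<in> V - T \<longrightarrow> f x \<in> {0, 1/2, 1}) \<and> (x \<notin> V - T \<longrightarrow> f x = 0))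
         \<and> lp_feasible V E T {} f \<and> lp_obj V T f \<le> lp_obj V T d"
        using rounding'[OF graph TV d(2)] by blast
      then have "f \<in> F" "lp_obj V T f \<le> x" using d by (auto simp: F_def)
      then show "lp_obj V T h0 \<le> x" using h0min by fastforce
    qed
  qed
  have h0half: "1/2 \<le> h0 w" if w: "w \<in> N" for w
  proof -
    have wVT: "w \<in> V - T" using w NVT by auto
    then have "h0 w \<in> {0, 1/2, 1}" using h0F by (auto simp: F_def)
    moreover have "h0 w \<noteq> 0"
    proof
      assume h0w: "h0 w = 0"
      have "lp_feasible V E T {w} h0" using h0feas h0w by (simp add: lp_feasible_def)
      then have "lp_val V E T {w} \<le> LP V E T" using lp_val_le LP_eq by metis
      moreover obtain t where tt: "t \<in> T" "w \<in> nbr E t" using w N_eq by auto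
      have "w \<in> nbr E t - T" using tt wVT by simp
      then have "LP V E T < lp_val V E T {w}" using R3 tt(1) by blast
      ultimately show False by linarith
    qed
    ultimately show ?thesis by auto
  qed
  have finVT: "finite (V - T)" using finV by simp
  have obj_ds: "lp_obj V T ds = real (card N) * (1/2)"
    unfolding lp_obj_def ds_def by (rule sum_ind[OF finVT NVT])
  have h0nn: "\<And>v. v \<in> V - T \<Longrightarrow> 0 \<le> h0 v" using h0feas by (simp add: lp_feasible_def)
  have "real (card N) * (1/2) = (\<Sum>v\<in>N. (1/2::real))" by simp
  also have "\<dots> \<le> (\<Sum>v\<in>N. h0 v)" using h0half by (rule sum_mono)
  also have "\<dots> \<le> (\<Sum>v\<in>V - T. h0 v)" using NVT h0nn by (intro sum_mono2 finVT) auto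
  finally have "lp_obj V T ds \<le> LP V E T" using obj_ds LP_eq by (simp add: lp_obj_def)
  moreover have "LP V E T \<le> lp_obj V T ds" unfolding LP_def by (rule lp_val_le[OF dsfeas])
  ultimately have LPds: "LP V E T = lp_obj V T ds" by simp
  have part1: "lp_optimal V E T (\<lambda>v. if v \<in> nbr_set E T then 1/2 else 0)"
    using dsfeas LPds unfolding lp_optimal_def ds_def N_def by simp
  have part2: "unique_min_separating_cut V E T t (nbr E t)" if t: "t \<in> T" for t
  proof -
    let ?S = "nbr E t"
    have sep: "separating_cut V E T t ?S"
      unfolding separating_cut_def
    proof (intro conjI ballI notI)
      show "?S \<subseteq> V - T" using nbrVT[OF t] .
      fix t' assume t': "t' \<in> T - {t}" and c: "connected_in V E ?S t t'"
      let ?R = "\<lambda>x y. E x y \<and> x \<in> V - ?S \<and> y \<in> V - ?S"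
      have r: "?R\<^sup>*\<^sup>* t t'" using c by (simp add: connected_in_def)
      have "?R\<^sup>*\<^sup>* t z \<Longrightarrow> z = t" for z
        by (induction rule: rtranclp_induct) (auto simp: nbr_def)
      then show False using r t' by blast
    qed
    have finS: "finite ?S" using nbrVT[OF t] finV finite_subset by blast
    have "S' = ?S" if S': "separating_cut V E T t S'" "card S' \<le> card ?S" for S'
    proof (rule ccontr)
      assume ne: "S' \<noteq> ?S"
      have S'VT: "S' \<subseteq> V - T" using S' by (simp add: separating_cut_def)
      have finS': "finite S'" using S'VT finV finite_subset by blast
      have "\<not> ?S \<subseteq> S'"
      proof
        assume "?S \<subseteq> S'"
        moreover have "card ?S = card S'" using card_mono[OF finS' \<open>?S \<subseteq> S'\<close>] S'(2) by simp
        ultimately show False using card_subset_eq[OF finS'] ne by blast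
      qed
      then obtain w where w: "w \<in> ?S" "w \<notin> S'" by blast
      have wVT: "w \<in> V - T" using w nbrVT[OF t] by auto
      define B where "B = (\<Union>t'\<in>T - {t}. nbr E t')"
      have BVT: "B \<subseteq> V - T" using nbrVT by (auto simp: B_def)
      have disj: "?S \<inter> B = {}"
      proof (rule ccontr)
        assume "?S \<inter> B \<noteq> {}"
        then obtain x t' where "x \<in> ?S" "t' \<in> T - {t}" "x \<in> nbr E t'" by (auto simp: B_def)
        then show False using uniq_t[of t x t'] t nbrVT by (auto simp: nbr_def)
      qed
      have NSB: "N = ?S \<union> B" using t by (auto simp: N_eq B_def)
      have finB: "finite B" using BVT finVT finite_subset by blast
      have cardN: "card N = card ?S + card B" unfolding NSB by (rule card_Un_disjoint[OF finS finB disj])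
      define d' where "d' = (\<lambda>v. (if v \<in> S' then 1/2 else 0) + (if v \<in> B then 1/2 else (0::real)))"
      have wB: "w \<notin> B" using w disj by auto
      have d'nn: "\<And>v. 0 \<le> d' v" by (simp add: d'_def)
      have keyC: "1 \<le> (\<Sum>v\<in>set P - T. d' v)" if P: "P \<in> term_paths V E T" "hd P = t" for P
      proof -
        have lt: "last P \<in> T - {t}" using tp[OF P(1)] P(2) by auto
        obtain y where y: "y \<in> set P - T" "E (last P) y" "y \<in> V" using endsT(2)[OF P(1)] by blast
        have yB: "y \<in> B" using y lt by (auto simp: B_def nbr_def)
        have "set P \<inter> S' \<noteq> {}"
        proof
          assume em: "set P \<inter> S' = {}"
          have Pp: "P \<noteq> []" "ch E P" using P(1) by (auto simp: term_paths_iff)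
          have sub: "set P \<subseteq> V - S'" using em tp[OF P(1)] by auto
          have "(\<lambda>x y. E x y \<and> x \<in> V - S' \<and> y \<in> V - S')\<^sup>*\<^sup>* (hd P) (last P)"
            by (rule ch_rtranclp[OF Pp(2) Pp(1) sub])
          moreover have "hd P \<in> V - S'" "last P \<in> V - S'"
            using sub hd_in_set[OF Pp(1)] last_in_set[OF Pp(1)] by auto
          ultimately have "connected_in V E S' t (last P)" using P(2) by (simp add: connected_in_def)
          then show False using S'(1) lt by (simp add: separating_cut_def)
        qed
        then obtain z where z: "z \<in> set P" "z \<in> S'" by blast
        have zT: "z \<in> set P - T" using z S'VT by auto
        show ?thesis
          by (rule two_pts[of _ _ z y]) (use zT y z yB d'nn in \<open>auto simp: d'_def\<close>)
      qed
      have d'feas: "lp_feasible V E T {w} d'"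
        unfolding lp_feasible_def
      proof (intro conjI ballI)
        fix P assume P: "P \<in> term_paths V E T"
        show "1 \<le> (\<Sum>v\<in>set P - T. d' v)"
        proof (cases "hd P = t")
          case True then show ?thesis using keyC P by blast
        next
          case nh: False
          show ?thesis
          proof (cases "last P = t")
            case True
            have "hd (rev P) = t" using True by (simp add: hd_rev)
            then have "1 \<le> (\<Sum>v\<in>set (rev P) - T. d' v)"
              using keyC[OF rev_tp[OF Esym P]] by blast
            then show ?thesis by simp
          next
            case nl: False
            obtain x where x: "x \<in> set P - T" "E (hd P) x" "x \<in> V" using endsT(1)[OF P] by blast
            obtain y where y: "y \<in> set P - T" "E (last P) y" "y \<in> V" using endsT(2)[OF P] by blast
            have xB: "x \<in> B" "y \<in> B" using x y tp[OF P] nh nl by (auto simp: B_def nbr_def)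
            have "x \<noteq> y" using uniq_t[of "hd P" x "last P"] x y tp[OF P] by auto
            then show ?thesis
              by (intro two_pts[of _ _ x y]) (use xB x y d'nn in \<open>auto simp: d'_def\<close>)
          qed
        qed
      qed (use w wB in \<open>auto simp: d'_def\<close>)
      have "lp_obj V T d' = real (card S') * (1/2) + real (card B) * (1/2)"
        unfolding lp_obj_def d'_def sum.distrib
        using sum_ind[OF finVT S'VT, of "1/2"] sum_ind[OF finVT BVT, of "1/2"] by simp
      also have "\<dots> \<le> real (card N) * (1/2)" using S'(2) cardN by simp
      also have "\<dots> = LP V E T" using LPds obj_ds by simp
      finally have "lp_val V E T {w} \<le> LP V E T" using lp_val_le[OF d'feas] by linarith
      moreover have "w \<in> nbr E t - T" using w(1) wVT by simp
      then have "LP V E T < lp_val V E T {w}" using R3 t by blast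
      ultimately show False by linarith
    qed
    then show ?thesis using sep unfolding unique_min_separating_cut_def by blast
  qed
  show ?thesis using part1 part2 by blast
qed

end
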